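(* For any $k\in\mathbb{N}$, there exist simple connected graphs $G$ and $G'$ (each with at least one edge) such that $\mathrm{diam}(G)-\omega'(G)=k$ and $\omega'(G')-\mathrm{diam}(G')=k$.
   Context: For distinct $u_1,u_2\in V(G)$, an edge $e$ separates $u_1,u_2$ if $e$ lies on every shortest $(u_1,u_2)$-path in $G$. The auxiliary graph $H(G)$ has vertex set $E(G)$, and distinct edges $e_1,e_2$ are adjacent in $H(G)$ iff some pair of distinct vertices of $G$ is separated by both $e_1$ and $e_2$. $\omega'(G)$ denotes the clique number of $H(G)$, and $\mathrm{diam}(G)$ is the diameter of $G$. *)

theory Defs
  imports Main
begin

definition simple_graph :: "'a set \<Rightarrow> 'a set set \<Rightarrow> bool" where
  "simple_graph V E \<longleftrightarrow> finite V \<and> (\<forall>e\<in>E. \<exists>u v. u \<noteq> v \<and> u \<in> V \<and> v \<in> V \<and> e = {u, v})"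

definition is_path :: "'a set \<Rightarrow> 'a set set \<Rightarrow> 'a list \<Rightarrow> bool" where
  "is_path V E p \<longleftrightarrow> p \<noteq> [] \<and> set p \<subseteq> V \<and> distinct p \<and>
     (\<forall>i. Suc i < length p \<longrightarrow> {p ! i, p ! Suc i} \<in> E)"

definition path_between :: "'a set \<Rightarrow> 'a set set \<Rightarrow> 'a \<Rightarrow> 'a \<Rightarrow> 'a list \<Rightarrow> bool" where
  "path_between V E u v p \<longleftrightarrow> is_path V E p \<and> hd p = u \<and> last p = v"

definition graph_connected :: "'a set \<Rightarrow> 'a set set \<Rightarrow> bool" where
  "graph_connected V E \<longleftrightarrow> (\<forall>u\<in>V. \<forall>v\<in>V. \<exists>p. path_between V E u v p)"

definition gdist :: "'a set \<Rightarrow> 'a set set \<Rightarrow> 'a \<Rightarrow> 'a \<Rightarrow> nat" where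
  "gdist V E u v = (LEAST n. \<exists>p. path_between V E u v p \<and> length p = Suc n)"

definition shortest_path :: "'a set \<Rightarrow> 'a set set \<Rightarrow> 'a \<Rightarrow> 'a \<Rightarrow> 'a list \<Rightarrow> bool" where
  "shortest_path V E u v p \<longleftrightarrow> path_between V E u v p \<and> length p = Suc (gdist V E u v)"

definition edge_on_path :: "'a set \<Rightarrow> 'a list \<Rightarrow> bool" where
  "edge_on_path e p \<longleftrightarrow> (\<exists>i. Suc i < length p \<and> e = {p ! i, p ! Suc i})"

definition separates :: "'a set \<Rightarrow> 'a set set \<Rightarrow> 'a set \<Rightarrow> 'a \<Rightarrow> 'a \<Rightarrow> bool" where
  "separates V E e u v \<longleftrightarrow> (\<forall>p. shortest_path V E u v p \<longrightarrow> edge_on_path e p)"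

text \<open>Adjacency in the auxiliary graph H(G) (vertex set E).\<close>

definition H_adj :: "'a set \<Rightarrow> 'a set set \<Rightarrow> 'a set \<Rightarrow> 'a set \<Rightarrow> bool" where
  "H_adj V E e1 e2 \<longleftrightarrow> e1 \<in> E \<and> e2 \<in> E \<and> e1 \<noteq> e2 \<and>
     (\<exists>u\<in>V. \<exists>v\<in>V. u \<noteq> v \<and> separates V E e1 u v \<and> separates V E e2 u v)"

definition H_clique :: "'a set \<Rightarrow> 'a set set \<Rightarrow> 'a set set \<Rightarrow> bool" where
  "H_clique V E C \<longleftrightarrow> C \<subseteq> E \<and> (\<forall>e1\<in>C. \<forall>e2\<in>C. e1 \<noteq> e2 \<longrightarrow> H_adj V E e1 e2)"

definition omega' :: "'a set \<Rightarrow> 'a set set \<Rightarrow> nat" where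
  "omega' V E = Max {card C | C. H_clique V E C}"

definition diam :: "'a set \<Rightarrow> 'a set set \<Rightarrow> nat" where
  "diam V E = Max {gdist V E u v | u v. u \<in> V \<and> v \<in> V}"

end

theory Submission
  imports Defs
begin

lemma pb_nonempty: "path_between V E u v p \<Longrightarrow> p \<noteq> []"
  by (simp add: path_between_def is_path_def)

lemma gdist_le: "path_between V E u v p \<Longrightarrow> gdist V E u v \<le> length p - 1"
proof -
  assume a: "path_between V E u v p"
  hence "length p = Suc (length p - 1)" using pb_nonempty[OF a] by simp
  hence "\<exists>q. path_between V E u v q \<and> length q = Suc (length p - 1)" using a by blast
  thus ?thesis unfolding gdist_def by (rule Least_le)
qed

lemma gdist_ex: "path_between V E u v q \<Longrightarrow> \<exists>p. path_between V E u v p \<and> length p = Suc (gdist V E u v)"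
proof -
  assume a: "path_between V E u v q"
  have "length q = Suc (length q - 1)" using pb_nonempty[OF a] by simp
  hence "\<exists>n p. path_between V E u v p \<and> length p = Suc n" using a by blast
  thus ?thesis unfolding gdist_def by (rule LeastI_ex)
qed

lemma gdist_lower:
  assumes "path_between V E u v q" "\<And>p. path_between V E u v p \<Longrightarrow> m \<le> length p - 1"
  shows "m \<le> gdist V E u v"
  using gdist_ex[OF assms(1)] assms(2) by force

lemma shortest_I:
  assumes "path_between V E u v p" "length p = Suc m" "\<And>p. path_between V E u v p \<Longrightarrow> m \<le> length p - 1"
  shows "shortest_path V E u v p"
proof -
  have "m \<le> gdist V E u v" by (rule gdist_lower[OF assms(1) assms(3)])
  moreover have "gdist V E u v \<le> m" using gdist_le[OF assms(1)] assms(2) by simp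
  ultimately show ?thesis using assms(1,2) by (simp add: shortest_path_def)
qed

lemma path_len1: "path_between V E u v p \<Longrightarrow> length p = 1 \<Longrightarrow> u = v"
  by (cases p) (auto simp: path_between_def)

lemma path_len2: "path_between V E u v p \<Longrightarrow> length p = 2 \<Longrightarrow> {u,v} \<in> E"
proof -
  assume a: "path_between V E u v p" "length p = 2"
  then obtain x y where p: "p = [x,y]"
    by (auto simp: numeral_2_eq_2 length_Suc_conv)
  have "\<forall>i. Suc i < length [x,y] \<longrightarrow> {[x,y]!i, [x,y]!Suc i} \<in> E" using a(1) unfolding p path_between_def is_path_def by blast
  hence "{[x,y]!0, [x,y]!Suc 0} \<in> E" by (metis One_nat_def length_Cons list.size(3) lessI)
  thus ?thesis using a(1) unfolding p path_between_def by simp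
qed

lemma path_ge3: "path_between V E u v p \<Longrightarrow> u \<noteq> v \<Longrightarrow> {u,v} \<notin> E \<Longrightarrow> 2 \<le> length p - 1"
proof -
  assume a: "path_between V E u v p" "u \<noteq> v" "{u,v} \<notin> E"
  have "p \<noteq> []" using pb_nonempty[OF a(1)] .
  hence "length p \<noteq> 0" by simp
  moreover have "length p \<noteq> 1" using path_len1[OF a(1)] a(2) by auto
  moreover have "length p \<noteq> 2" using path_len2[OF a(1)] a(3) by auto
  ultimately show ?thesis by linarith
qed

lemma path_ge2: "path_between V E u v p \<Longrightarrow> u \<noteq> v \<Longrightarrow> 1 \<le> length p - 1"
proof -
  assume a: "path_between V E u v p" "u \<noteq> v"
  have "p \<noteq> []" using pb_nonempty[OF a(1)] .
  hence "length p \<noteq> 0" by simp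
  moreover have "length p \<noteq> 1" using path_len1[OF a(1)] a(2) by auto
  ultimately show ?thesis by linarith
qed

lemma path_single: "u \<in> V \<Longrightarrow> path_between V E u u [u]"
  by (simp add: path_between_def is_path_def)

lemma path_edge: "u \<in> V \<Longrightarrow> v \<in> V \<Longrightarrow> u \<noteq> v \<Longrightarrow> {u,v} \<in> E \<Longrightarrow> path_between V E u v [u,v]"
  by (auto simp: path_between_def is_path_def less_Suc_eq)

lemma path_3: "u \<in> V \<Longrightarrow> v \<in> V \<Longrightarrow> w \<in> V \<Longrightarrow> distinct [u,w,v] \<Longrightarrow> {u,w} \<in> E \<Longrightarrow> {w,v} \<in> E
   \<Longrightarrow> path_between V E u v [u,w,v]"
  apply (auto simp: path_between_def is_path_def)
  subgoal for i by (cases i) (auto simp: less_Suc_eq)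
  done

lemma sep_adj:
  assumes "u \<in> V" "v \<in> V" "u \<noteq> v" "{u,v} \<in> E" "separates V E e u v"
  shows "e = {u,v}"
proof -
  have "shortest_path V E u v [u,v]"
    by (rule shortest_I[OF path_edge[OF assms(1-4)], of 1]) (use path_ge2 assms(3) in auto)
  hence "edge_on_path e [u,v]" using assms(5) by (simp add: separates_def)
  thus ?thesis by (auto simp: edge_on_path_def)
qed

lemma edge_on_sub: "edge_on_path e p \<Longrightarrow> e \<subseteq> set p"
  by (auto simp: edge_on_path_def)

lemma sep_two:
  assumes "shortest_path V E u v p1" "shortest_path V E u v p2" "set p1 \<inter> set p2 \<subseteq> {u,v}"
    "{u,v} \<notin> E" "separates V E e u v"
  shows False
proof -
  have e1: "edge_on_path e p1" "edge_on_path e p2" using assms by (auto simp: separates_def)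
  then obtain i where i: "Suc i < length p1" "e = {p1 ! i, p1 ! Suc i}" by (auto simp: edge_on_path_def)
  have ip: "is_path V E p1" using assms(1) by (simp add: shortest_path_def path_between_def)
  hence "e \<in> E" "p1 ! i \<noteq> p1 ! Suc i" using i unfolding is_path_def
    by (auto simp: nth_eq_iff_index_eq)
  moreover have "e \<subseteq> {u,v}" using edge_on_sub e1 assms(3) by blast
  ultimately have "e = {u,v}" using i by auto
  thus False using \<open>e \<in> E\<close> assms(4) by simp
qed

lemma omega1:
  assumes "E \<noteq> {}"
    "\<forall>u\<in>V. \<forall>v\<in>V. u \<noteq> v \<longrightarrow> (\<forall>e1 e2. separates V E e1 u v \<longrightarrow> separates V E e2 u v \<longrightarrow> e1 = e2)"
  shows "omega' V E = 1"
proof -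
  let ?S = "{card C | C. H_clique V E C}"
  have "card C \<le> 1" if "H_clique V E C" for C
  proof -
    have "\<forall>a\<in>C. \<forall>b\<in>C. a = b"
      using that assms(2) unfolding H_clique_def H_adj_def by metis
    thus ?thesis by (metis One_nat_def card.infinite card_le_Suc0_iff_eq le0)
  qed
  have sub: "?S \<subseteq> {0,1}"
  proof
    fix x assume "x \<in> ?S"
    then obtain C where "x = card C" "H_clique V E C" by blast
    hence "x \<le> 1" using \<open>\<And>C. H_clique V E C \<Longrightarrow> card C \<le> 1\<close> by blast
    thus "x \<in> {0,1}" by auto
  qed
  obtain e where "e \<in> E" using assms(1) by blast
  hence "H_clique V E {e}" by (simp add: H_clique_def)
  hence "1 \<in> ?S" by force
  moreover have "finite ?S" using sub finite_subset by blast
  ultimately show ?thesis unfolding omega'_def using sub by (intro Max_eqI) auto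
qed

lemma diam_eq:
  assumes "\<forall>u\<in>V. \<forall>v\<in>V. gdist V E u v \<le> d" "a \<in> V" "b \<in> V" "gdist V E a b = d"
  shows "diam V E = d"
proof -
  let ?S = "{gdist V E u v | u v. u \<in> V \<and> v \<in> V}"
  have sub: "?S \<subseteq> {..d}" using assms(1) by auto
  have "finite ?S" using finite_subset[OF sub] by simp
  moreover have "d \<in> ?S" using assms by blast
  ultimately show ?thesis unfolding diam_def using sub by (intro Max_eqI) auto
qed


definition LV :: "nat \<Rightarrow> nat set" where "LV D = {..<2 * Suc D}"
definition LE :: "nat \<Rightarrow> nat set set" where
  "LE D = {{a,b} | a b. a \<in> LV D \<and> b \<in> LV D \<and> Suc (a div 2) = b div 2}"

lemma LE_iff: "{x,y} \<in> LE D \<longleftrightarrow> x \<in> LV D \<and> y \<in> LV D \<and> (Suc (x div 2) = y div 2 \<or> Suc (y div 2) = x div 2)"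
  unfolding LE_def by (auto simp: doubleton_eq_iff)

lemma LV_iff: "x \<in> LV D \<longleftrightarrow> x div 2 \<le> D"
  unfolding LV_def by auto

lemma layer_bound:
  assumes "is_path (LV D) (LE D) p" "i < length p"
  shows "\<bar>int (p!i div 2) - int (p!0 div 2)\<bar> \<le> int i"
  using assms(2)
proof (induction i)
  case 0 then show ?case by simp
next
  case (Suc i)
  have "{p!i, p!Suc i} \<in> LE D" using assms(1) Suc.prems by (simp add: is_path_def)
  hence "Suc (p!i div 2) = p!Suc i div 2 \<or> Suc (p!Suc i div 2) = p!i div 2" by (simp add: LE_iff)
  then show ?case using Suc by auto
qed

lemma layer_path:
  assumes "path_between (LV D) (LE D) u v p"
  shows "\<bar>int (v div 2) - int (u div 2)\<bar> \<le> int (length p - 1)"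
proof -
  have ne: "p \<noteq> []" using pb_nonempty[OF assms] .
  have "last p = p ! (length p - 1)" using ne by (simp add: last_conv_nth)
  moreover have "hd p = p ! 0" using ne by (simp add: hd_conv_nth)
  ultimately show ?thesis using layer_bound[of D p "length p - 1"] assms ne
    by (simp add: path_between_def)
qed

lemma layered_path:
  assumes "u \<in> LV D" "v \<in> LV D" "0 < d" "f 0 = u div 2" "f d = v div 2"
    "\<forall>i<d. f (Suc i) = Suc (f i) \<or> f i = Suc (f (Suc i))" "inj_on f {..d}" "\<forall>i\<le>d. f i \<le> D"
    "c \<le> 1"
  defines "h \<equiv> \<lambda>i. if i = 0 then u else if i = d then v else 2 * f i + c"
  shows "path_between (LV D) (LE D) u v (map h [0..<Suc d])"
    and "set (map h [0..<Suc d]) \<subseteq> {u,v} \<union> {x. x mod 2 = c}"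
proof -
  have L: "h i div 2 = f i" if "i \<le> d" for i
    using assms(3-5,9) that unfolding h_def by auto
  have inV: "h i \<in> LV D" if "i \<le> d" for i
    using L[OF that] assms(8) that by (simp add: LV_iff)
  have inj: "inj_on h {0..<Suc d}"
  proof (rule inj_onI)
    fix i j assume "i \<in> {0..<Suc d}" "j \<in> {0..<Suc d}" "h i = h j"
    hence ij: "i \<le> d" "j \<le> d" by auto
    hence "f i = f j" using L[of i] L[of j] \<open>h i = h j\<close> by metis
    thus "i = j" using assms(7) ij by (auto dest: inj_onD)
  qed
  have edges: "{h i, h (Suc i)} \<in> LE D" if "i < d" for i
    using L[of i] L[of "Suc i"] inV[of i] inV[of "Suc i"] assms(6) that by (auto simp: LE_iff)
  show "path_between (LV D) (LE D) u v (map h [0..<Suc d])"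
  proof -
    let ?p = "map h [0..<Suc d]"
    have h0: "h 0 = u" and hd: "h d = v" using assms(3) by (auto simp: h_def)
    have "hd ?p = u" using h0 by (simp add: hd_map del: upt_Suc)
    moreover have "last ?p = v" using hd by (simp add: last_map)
    moreover have "distinct ?p" using inj by (simp add: distinct_map del: upt_Suc)
    moreover have "set ?p \<subseteq> LV D" using inV by (auto simp del: upt_Suc)
    moreover have "\<forall>i. Suc i < length ?p \<longrightarrow> {?p ! i, ?p ! Suc i} \<in> LE D"
    proof (intro allI impI)
      fix i assume i: "Suc i < length ?p"
      hence "?p ! i = h i" "?p ! Suc i = h (Suc i)" by (simp_all del: upt_Suc)
      thus "{?p ! i, ?p ! Suc i} \<in> LE D" using edges i by simp
    qed
    ultimately show ?thesis unfolding path_between_def is_path_def by simp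
  qed
  show "set (map h [0..<Suc d]) \<subseteq> {u,v} \<union> {x. x mod 2 = c}"
    using assms(9) by (auto simp: h_def)
qed


lemma LG_gen:
  assumes "u \<in> LV D" "v \<in> LV D" "0 < d" "f 0 = u div 2" "f d = v div 2"
    "\<forall>i<d. f (Suc i) = Suc (f i) \<or> f i = Suc (f (Suc i))" "inj_on f {..d}" "\<forall>i\<le>d. f i \<le> D"
    "int d = \<bar>int (v div 2) - int (u div 2)\<bar>"
  shows "(\<exists>p. path_between (LV D) (LE D) u v p \<and> length p \<le> Suc D) \<and>
    ({u,v} \<notin> LE D \<longrightarrow> (\<exists>p1 p2. shortest_path (LV D) (LE D) u v p1 \<and> shortest_path (LV D) (LE D) u v p2
       \<and> set p1 \<inter> set p2 \<subseteq> {u,v}))"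
proof -
  note P0 = layered_path[OF assms(1-8) le0]
  note P1 = layered_path[OF assms(1-8) order_refl]
  let ?p0 = "map (\<lambda>i. if i = 0 then u else if i = d then v else 2 * f i + 0) [0..<Suc d]"
  let ?p1 = "map (\<lambda>i. if i = 0 then u else if i = d then v else 2 * f i + 1) [0..<Suc d]"
  have dD: "d \<le> D" using assms(8,9,1,2) by (auto simp: LV_iff)
  have sh: "shortest_path (LV D) (LE D) u v ?p0" "shortest_path (LV D) (LE D) u v ?p1"
  proof -
    have lb: "d \<le> length p - 1" if "path_between (LV D) (LE D) u v p" for p
    proof -
      have "int d \<le> int (length p - 1)" using layer_path[OF that] assms(9) by linarith
      thus ?thesis by simp
    qed
    show "shortest_path (LV D) (LE D) u v ?p0" by (rule shortest_I[OF P0(1)]) (simp, rule lb)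
    show "shortest_path (LV D) (LE D) u v ?p1" by (rule shortest_I[OF P1(1)]) (simp, rule lb)
  qed
  have "set ?p0 \<inter> set ?p1 \<subseteq> {u,v}" using P0(2) P1(2) by auto
  hence int: "set ?p0 \<inter> set ?p1 \<subseteq> {u,v}" .
  have len: "length ?p0 \<le> Suc D" using dD by (simp del: upt_Suc)
  show ?thesis
  proof (intro conjI impI)
    show "\<exists>p. path_between (LV D) (LE D) u v p \<and> length p \<le> Suc D"
      by (intro exI[of _ ?p0] conjI) (rule P0(1), rule len)
    show "\<exists>p1 p2. shortest_path (LV D) (LE D) u v p1 \<and> shortest_path (LV D) (LE D) u v p2
       \<and> set p1 \<inter> set p2 \<subseteq> {u,v}"
      by (intro exI[of _ ?p0] exI[of _ ?p1] conjI) (rule sh(1), rule sh(2), rule int)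
  qed
qed

lemma LG_pair:
  assumes "2 \<le> D" "u \<in> LV D" "v \<in> LV D" "u \<noteq> v"
  shows "(\<exists>p. path_between (LV D) (LE D) u v p \<and> length p \<le> Suc D) \<and>
    ({u,v} \<notin> LE D \<longrightarrow> (\<exists>p1 p2. shortest_path (LV D) (LE D) u v p1 \<and> shortest_path (LV D) (LE D) u v p2
       \<and> set p1 \<inter> set p2 \<subseteq> {u,v}))"
proof -
  define a where "a = u div 2"
  define b where "b = v div 2"
  have aD: "a \<le> D" "b \<le> D" using assms(2,3) by (auto simp: LV_iff a_def b_def)
  consider "a = b" | "a < b" | "b < a" by linarith
  then show ?thesis
  proof cases
    case 1
    define a' where "a' = (if a < D then a + 1 else a - 1)"
    define w where "w = (\<lambda>c::nat. 2 * a' + c)"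
    have a'D: "a' \<le> D" "Suc a' = a \<or> Suc a = a'" using aD assms(1) by (auto simp: a'_def)
    have wl: "w c div 2 = a'" if "c \<le> 1" for c using that by (auto simp: w_def)
    have wV: "w c \<in> LV D" if "c \<le> 1" for c using wl[OF that] a'D by (simp add: LV_iff)
    have wne: "w c \<noteq> u" "w c \<noteq> v" if "c \<le> 1" for c
      using wl[OF that] a'D 1 a_def b_def by auto
    have ed: "{u, w c} \<in> LE D" "{w c, v} \<in> LE D" if "c \<le> 1" for c
      using wl[OF that] wV[OF that] a'D 1 assms(2,3) a_def b_def by (auto simp: LE_iff)
    have pth: "path_between (LV D) (LE D) u v [u, w c, v]" if "c \<le> 1" for c
      using path_3[OF assms(2,3) wV[OF that]] wne[OF that] assms(4) ed[OF that] by auto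
    have nE: "{u,v} \<notin> LE D" using 1 by (simp add: LE_iff a_def b_def)
    have sh: "shortest_path (LV D) (LE D) u v [u, w c, v]" if "c \<le> 1" for c
      by (rule shortest_I[OF pth[OF that], of 2]) (simp, rule path_ge3[OF _ assms(4) nE])
    have "w 0 \<noteq> w 1" by (simp add: w_def)
    hence "set [u, w 0, v] \<inter> set [u, w 1, v] \<subseteq> {u,v}" using wne by auto
    moreover have "length [u, w 0, v] \<le> Suc D" using assms(1) by simp
    ultimately show ?thesis using sh[of 0] sh[of 1] pth[of 0] by blast
  next
    case 2
    show ?thesis
      by (rule LG_gen[where f = "\<lambda>i. a + i" and d = "b - a"])
         (use 2 assms aD in \<open>auto simp: a_def b_def inj_on_def\<close>)
  next
    case 3
    have injd: "inj_on (\<lambda>i. a - i) {..a-b}" by (rule inj_onI) auto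
    show ?thesis
      by (rule LG_gen[where f = "\<lambda>i. a - i" and d = "a - b"])
         (use 3 assms aD injd in \<open>auto simp: a_def b_def\<close>)
  qed
qed


lemma LG_simple: "simple_graph (LV D) (LE D)"
proof -
  have "\<exists>u v. u \<noteq> v \<and> u \<in> LV D \<and> v \<in> LV D \<and> e = {u, v}" if e: "e \<in> LE D" for e
  proof -
    obtain a b where "e = {a,b}" "a \<in> LV D" "b \<in> LV D" "Suc (a div 2) = b div 2"
      using e unfolding LE_def by blast
    moreover hence "a \<noteq> b" by auto
    ultimately show ?thesis by blast
  qed
  moreover have "finite (LV D)" by (simp add: LV_def)
  ultimately show ?thesis unfolding simple_graph_def by blast
qed

lemma LG_conn: "2 \<le> D \<Longrightarrow> graph_connected (LV D) (LE D)"
  unfolding graph_connected_def using LG_pair path_single by metis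

lemma LG_gdist_le:
  assumes "2 \<le> D" "u \<in> LV D" "v \<in> LV D"
  shows "gdist (LV D) (LE D) u v \<le> D"
proof (cases "u = v")
  case True
  then show ?thesis using gdist_le[OF path_single[OF assms(2)]] by simp
next
  case False
  then obtain p where "path_between (LV D) (LE D) u v p" "length p \<le> Suc D"
    using LG_pair[OF assms] by blast
  then show ?thesis using gdist_le[of "LV D" "LE D" u v p] by linarith
qed

lemma LG_diam: assumes "2 \<le> D" shows "diam (LV D) (LE D) = D"
proof -
  have a: "0 \<in> LV D" "2 * D \<in> LV D" by (auto simp: LV_def)
  have "D \<le> gdist (LV D) (LE D) 0 (2 * D)"
  proof -
    obtain q where q: "path_between (LV D) (LE D) 0 (2 * D) q"
      using LG_conn[OF assms] a unfolding graph_connected_def by blast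
    show ?thesis
    proof (rule gdist_lower[OF q])
      fix p assume "path_between (LV D) (LE D) 0 (2 * D) p"
      from layer_path[OF this] have "int D \<le> int (length p - 1)" by simp
      thus "D \<le> length p - 1" by simp
    qed
  qed
  moreover have "gdist (LV D) (LE D) 0 (2 * D) \<le> D" using LG_gdist_le[OF assms a] .
  ultimately show ?thesis
    using diam_eq[of "LV D" "LE D" D 0 "2 * D"] LG_gdist_le[OF assms] a by simp
qed

lemma LG_omega: assumes "2 \<le> D" shows "omega' (LV D) (LE D) = 1"
proof (rule omega1)
  have "{0, 2} \<in> LE D" using assms by (simp add: LE_iff LV_def)
  thus "LE D \<noteq> {}" by blast
  show "\<forall>u\<in>LV D. \<forall>v\<in>LV D. u \<noteq> v \<longrightarrow> (\<forall>e1 e2. separates (LV D) (LE D) e1 u v \<longrightarrow>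
      separates (LV D) (LE D) e2 u v \<longrightarrow> e1 = e2)"
  proof (intro ballI impI allI)
    fix u v e1 e2 assume uv: "u \<in> LV D" "v \<in> LV D" "u \<noteq> v"
      and s: "separates (LV D) (LE D) e1 u v" "separates (LV D) (LE D) e2 u v"
    show "e1 = e2"
    proof (cases "{u,v} \<in> LE D")
      case True
      then show ?thesis using sep_adj[OF uv True s(1)] sep_adj[OF uv True s(2)] by simp
    next
      case False
      then obtain p1 p2 where pp: "shortest_path (LV D) (LE D) u v p1" "shortest_path (LV D) (LE D) u v p2"
        "set p1 \<inter> set p2 \<subseteq> {u,v}" using LG_pair[OF assms uv] by blast
      show ?thesis using sep_two[OF pp False s(1)] by (rule FalseE)
    qed
  qed
qed

definition K2V :: "nat set" where "K2V = {0,1}"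
definition K2E :: "nat set set" where "K2E = {{0,1}}"

lemma K2_simple: "simple_graph K2V K2E"
  unfolding simple_graph_def K2V_def K2E_def by auto

lemma K2_pair: "u \<in> K2V \<Longrightarrow> v \<in> K2V \<Longrightarrow> u \<noteq> v \<Longrightarrow> {u,v} \<in> K2E"
  unfolding K2V_def K2E_def by auto

lemma K2_conn: "graph_connected K2V K2E"
  unfolding graph_connected_def using K2_pair path_edge path_single by metis

lemma K2_gdist_le: "u \<in> K2V \<Longrightarrow> v \<in> K2V \<Longrightarrow> gdist K2V K2E u v \<le> 1"
proof (cases "u = v")
  case True
  assume "u \<in> K2V" then show ?thesis using gdist_le[OF path_single] True by fastforce
next
  case False
  assume a: "u \<in> K2V" "v \<in> K2V"
  then show ?thesis using gdist_le[OF path_edge[OF a False K2_pair[OF a False]]] by simp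
qed

lemma K2_diam: "diam K2V K2E = 1"
proof -
  have a: "(0::nat) \<in> K2V" "(1::nat) \<in> K2V" by (auto simp: K2V_def)
  have ne: "(0::nat) \<noteq> 1" by simp
  have "1 \<le> gdist K2V K2E 0 1"
    by (rule gdist_lower[OF path_edge[OF a ne K2_pair[OF a ne]]]) (erule path_ge2[OF _ ne])
  hence "gdist K2V K2E 0 1 = 1" using K2_gdist_le[OF a] by simp
  thus ?thesis using diam_eq[of K2V K2E 1 0 1] K2_gdist_le a by blast
qed

lemma K2_omega: "omega' K2V K2E = 1"
proof (rule omega1)
  show "K2E \<noteq> {}" by (simp add: K2E_def)
  show "\<forall>u\<in>K2V. \<forall>v\<in>K2V. u \<noteq> v \<longrightarrow> (\<forall>e1 e2. separates K2V K2E e1 u v \<longrightarrow>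
      separates K2V K2E e2 u v \<longrightarrow> e1 = e2)"
    using sep_adj K2_pair by metis
qed


definition SV :: "nat \<Rightarrow> nat set" where "SV n = {..n}"
definition SE :: "nat \<Rightarrow> nat set set" where "SE n = (\<lambda>i. {0,i}) ` {1..n}"

lemma SE_iff: "{x,y} \<in> SE n \<longleftrightarrow> (x = 0 \<and> 1 \<le> y \<and> y \<le> n) \<or> (y = 0 \<and> 1 \<le> x \<and> x \<le> n)"
  unfolding SE_def by (auto simp: doubleton_eq_iff)

lemma S_simple: "simple_graph (SV n) (SE n)"
proof -
  have "\<exists>u v. u \<noteq> v \<and> u \<in> SV n \<and> v \<in> SV n \<and> e = {u, v}" if e: "e \<in> SE n" for e
  proof -
    obtain i where "i \<in> {1..n}" "e = {0,i}" using e unfolding SE_def by blast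
    thus ?thesis by (intro exI[of _ 0] exI[of _ i]) (auto simp: SV_def)
  qed
  thus ?thesis unfolding simple_graph_def by (simp add: SV_def)
qed

lemma S_path:
  assumes "u \<in> SV n" "v \<in> SV n"
  shows "\<exists>p. path_between (SV n) (SE n) u v p \<and> length p \<le> 3"
proof -
  have z: "0 \<in> SV n" by (simp add: SV_def)
  consider "u = v" | "u \<noteq> v" "u = 0 \<or> v = 0" | "u \<noteq> v" "u \<noteq> 0" "v \<noteq> 0" by blast
  then show ?thesis
  proof cases
    case 1 then show ?thesis using path_single[OF assms(1)] by force
  next
    case 2
    hence "{u,v} \<in> SE n" using assms by (auto simp: SE_iff SV_def)
    then show ?thesis using path_edge[OF assms 2(1)] by force
  next
    case 3
    have e: "{u,0} \<in> SE n" "{0,v} \<in> SE n" using assms 3 by (auto simp: SE_iff SV_def)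
    have "distinct [u,0,v]" using 3 by simp
    then show ?thesis using path_3[OF assms z _ e] by force
  qed
qed

lemma S_conn: "graph_connected (SV n) (SE n)"
  unfolding graph_connected_def using S_path by blast

lemma S_gdist_le: "u \<in> SV n \<Longrightarrow> v \<in> SV n \<Longrightarrow> gdist (SV n) (SE n) u v \<le> 2"
proof -
  assume a: "u \<in> SV n" "v \<in> SV n"
  then obtain p where "path_between (SV n) (SE n) u v p" "length p \<le> 3" using S_path by blast
  then show ?thesis using gdist_le[of "SV n" "SE n" u v p] by linarith
qed

lemma S_leaf_gdist:
  assumes "i \<in> {1..n}" "j \<in> {1..n}" "i \<noteq> j"
  shows "gdist (SV n) (SE n) i j = 2"
proof -
  have a: "i \<in> SV n" "j \<in> SV n" using assms by (auto simp: SV_def)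
  have nE: "{i,j} \<notin> SE n" using assms by (auto simp: SE_iff)
  obtain q where q: "path_between (SV n) (SE n) i j q" using S_path[OF a] by blast
  have "2 \<le> gdist (SV n) (SE n) i j"
    by (rule gdist_lower[OF q]) (erule path_ge3[OF _ assms(3) nE])
  thus ?thesis using S_gdist_le[OF a] by simp
qed

lemma S_diam: assumes "2 \<le> n" shows "diam (SV n) (SE n) = 2"
proof -
  have "gdist (SV n) (SE n) 1 2 = 2" using S_leaf_gdist[of 1 n 2] assms by simp
  moreover have "(1::nat) \<in> SV n" "(2::nat) \<in> SV n" using assms by (auto simp: SV_def)
  ultimately show ?thesis using diam_eq[of "SV n" "SE n" 2 1 2] S_gdist_le by blast
qed

lemma S_shortest:
  assumes "i \<in> {1..n}" "j \<in> {1..n}" "i \<noteq> j" "shortest_path (SV n) (SE n) i j p"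
  shows "p = [i,0,j]"
proof -
  have "length p = 3" using assms(4) S_leaf_gdist[OF assms(1-3)] by (simp add: shortest_path_def)
  then obtain x y z where p: "p = [x,y,z]" by (auto simp: numeral_3_eq_3 length_Suc_conv)
  have pb: "path_between (SV n) (SE n) i j [x,y,z]" using assms(4) p by (simp add: shortest_path_def)
  hence xz: "x = i" "z = j" by (auto simp: path_between_def)
  have "\<forall>k. Suc k < length [x,y,z] \<longrightarrow> {[x,y,z]!k, [x,y,z]!Suc k} \<in> SE n"
    using pb unfolding path_between_def is_path_def by blast
  hence "{[x,y,z]!0, [x,y,z]!Suc 0} \<in> SE n" by (metis One_nat_def length_Cons list.size(3) zero_less_Suc Suc_less_eq)
  hence "{x,y} \<in> SE n" by simp
  hence "y = 0" using xz assms(1) by (auto simp: SE_iff)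
  thus ?thesis using p xz by simp
qed

lemma S_omega: assumes "2 \<le> n" shows "omega' (SV n) (SE n) = n"
proof -
  let ?S = "{card C | C. H_clique (SV n) (SE n) C}"
  have fin: "finite (SE n)" by (simp add: SE_def)
  have cE: "card (SE n) = n"
    unfolding SE_def by (subst card_image) (auto simp: inj_on_def doubleton_eq_iff)
  have le: "x \<le> n" if x: "x \<in> ?S" for x
  proof -
    obtain C where "x = card C" "H_clique (SV n) (SE n) C" using x by blast
    thus ?thesis using card_mono[OF fin] cE by (simp add: H_clique_def)
  qed
  have "H_clique (SV n) (SE n) (SE n)"
    unfolding H_clique_def
  proof (intro conjI subset_refl ballI impI)
    fix e1 e2 assume e: "e1 \<in> SE n" "e2 \<in> SE n" "e1 \<noteq> e2"
    then obtain i j where ij: "i \<in> {1..n}" "j \<in> {1..n}" "e1 = {0,i}" "e2 = {0,j}"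
      unfolding SE_def by blast
    hence ne: "i \<noteq> j" using e(3) by blast
    have "separates (SV n) (SE n) e1 i j \<and> separates (SV n) (SE n) e2 i j"
      unfolding separates_def
    proof (intro conjI allI impI)
      fix p assume "shortest_path (SV n) (SE n) i j p"
      hence p: "p = [i,0,j]" using S_shortest[OF ij(1,2) ne] by blast
      show "edge_on_path e1 p" unfolding edge_on_path_def p ij(3)
        by (rule exI[of _ 0]) auto
      show "edge_on_path e2 p" unfolding edge_on_path_def p ij(4)
        by (rule exI[of _ 1]) auto
    qed
    moreover have "i \<in> SV n" "j \<in> SV n" using ij by (auto simp: SV_def)
    ultimately show "H_adj (SV n) (SE n) e1 e2"
      unfolding H_adj_def using e ne by blast
  qed
  hence "n \<in> ?S" using cE by force
  moreover have "finite ?S" using le by (meson finite_atMost finite_subset atMost_iff subsetI)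
  ultimately show ?thesis unfolding omega'_def using le by (intro Max_eqI) auto
qed

theorem proposition2:
  fixes k :: nat
  shows "(\<exists>(V :: nat set) E. simple_graph V E \<and> graph_connected V E \<and> E \<noteq> {} \<and>
            int (diam V E) - int (omega' V E) = int k) \<and>
         (\<exists>(V' :: nat set) E'. simple_graph V' E' \<and> graph_connected V' E' \<and> E' \<noteq> {} \<and>
            int (omega' V' E') - int (diam V' E') = int k)"
proof (intro conjI)
  show "\<exists>(V :: nat set) E. simple_graph V E \<and> graph_connected V E \<and> E \<noteq> {} \<and>
            int (diam V E) - int (omega' V E) = int k"
  proof (cases "k = 0")
    case True
    have "K2E \<noteq> {}" by (simp add: K2E_def)
    then show ?thesis using K2_simple K2_conn K2_diam K2_omega True by (intro exI[of _ K2V] exI[of _ K2E]) simp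
  next
    case False
    hence D: "2 \<le> k + 1" by simp
    have "{0, 2} \<in> LE (k+1)" by (simp add: LE_iff LV_def)
    hence "LE (k+1) \<noteq> {}" by blast
    then show ?thesis using LG_simple LG_conn[OF D] LG_diam[OF D] LG_omega[OF D]
      by (intro exI[of _ "LV (k+1)"] exI[of _ "LE (k+1)"]) simp
  qed
  show "\<exists>(V' :: nat set) E'. simple_graph V' E' \<and> graph_connected V' E' \<and> E' \<noteq> {} \<and>
            int (omega' V' E') - int (diam V' E') = int k"
  proof -
    have n: "2 \<le> k + 2" by simp
    have "{0, 1} \<in> SE (k+2)" by (simp add: SE_iff)
    hence "SE (k+2) \<noteq> {}" by blast
    then show ?thesis using S_simple S_conn S_diam[OF n] S_omega[OF n]
      by (intro exI[of _ "SV (k+2)"] exI[of _ "SE (k+2)"]) simp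
  qed
qed

end
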